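(* Let $\mu$ be any $r$-level Sherali-Adams solution of a $\Delta$-dense Max $k$-CSP instance $\mathcal{G}=(V,\mathcal{W},\{P_S\})$ with alphabet size $q$. Then for every integer $0<l\le r-k$ there exists an integer $0\le t\le l$ such that $$\mathbb{E}_{T\sim V^t,\ \phi_T\sim\mathcal{X}_T}[C(\mu|\phi_T)]\le\frac{k^2\log q}{l\Delta},$$ where $T$ is a uniformly random $t$-tuple of variables (identified with its underlying set) and $\phi_T$ is sampled from the marginal distribution $\mathcal{X}_T$ of $\mu$.
   Context: A Max $k$-CSP instance has finite variable set $V$, alphabet $\Sigma$ with $|\Sigma|=q$, a distribution $\mathcal{W}$ on $V^k$ and predicates $P_S:\Sigma^k\to[0,1]$; it is $\Delta$-dense if $\Delta\cdot\mathcal{W}(S)\le1/|V|^k$ for every $S\in V^k$. An $r$-level Sherali-Adams solution is a collection $\mu=\{\mathcal{X}_S\}$ of distributions $\mathcal{X}_S$ on $\Sigma^S$ for all $S\subseteq V$ with $|S|\le r$ whose marginals agree on intersections. For $|T|\le r-k$ and $\phi_T$ with $\mathcal{X}_T(\phi_T)>0$, the conditioned solution $\mu|\phi_T=\{\tilde{\mathcal{X}}_S\}_{|S|\le r-|T|}$ is given by $\tilde{\mathcal{X}}_S(\phi_S)=\mathcal{X}_{S\cup T}(\phi_S\circ\phi_T)/\mathcal{X}_T(\phi_T)$ if $\phi_S$ agrees with $\phi_T$ on $S\cap T$ and $0$ otherwise. For a tuple $S=(x_{i_1},\dots,x_{i_j})$, $C_\mu(x_S)$ is the total correlation (KL divergence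 of the joint distribution from the product of marginals, natural log) of $(\sigma_{i_1},\dots,\sigma_{i_j})$ jointly sampled from $\mathcal{X}_{\{x_{i_1},\dots,x_{i_j}\}}$, and $C(\mu)=\mathbb{E}_{S\sim\mathcal{W}}[C_\mu(x_S)]$. *)

theory Defs
  imports Complex_Main "HOL-Library.FuncSet"
begin

definition is_distr :: "('b \<Rightarrow> real) \<Rightarrow> 'b set \<Rightarrow> bool" where
  "is_distr p A \<longleftrightarrow> (\<forall>x\<in>A. 0 \<le> p x) \<and> sum p A = 1"

definition tuples :: "'v set \<Rightarrow> nat \<Rightarrow> 'v list set" where
  "tuples V k = {xs. set xs \<subseteq> V \<and> length xs = k}"

definition max_kcsp ::
  "'v set \<Rightarrow> 'a set \<Rightarrow> nat \<Rightarrow> ('v list \<Rightarrow> real) \<Rightarrow> ('v list \<Rightarrow> 'a list \<Rightarrow> real) \<Rightarrow> bool" where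
  "max_kcsp V \<Sigma> k W P \<longleftrightarrow> finite V \<and> V \<noteq> {} \<and> finite \<Sigma> \<and> \<Sigma> \<noteq> {} \<and>
     is_distr W (tuples V k) \<and>
     (\<forall>S\<in>tuples V k. \<forall>a\<in>tuples \<Sigma> k. 0 \<le> P S a \<and> P S a \<le> 1)"

definition csp_dense :: "real \<Rightarrow> 'v set \<Rightarrow> nat \<Rightarrow> ('v list \<Rightarrow> real) \<Rightarrow> bool" where
  "csp_dense \<Delta> V k W \<longleftrightarrow> (\<forall>S\<in>tuples V k. \<Delta> * W S \<le> 1 / real (card V) ^ k)"

text \<open>Assignments phi_S : S -> Sigma are extensional maps S to Sigma.
  X S is the local distribution on extensional maps S to Sigma.\<close>
definition marg ::
  "('v set \<Rightarrow> ('v \<Rightarrow> 'a) \<Rightarrow> real) \<Rightarrow> 'a set \<Rightarrow> 'v set \<Rightarrow> 'v set \<Rightarrow> ('v \<Rightarrow> 'a) \<Rightarrow> real" where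
  "marg X \<Sigma> S U \<psi> = (\<Sum>\<phi>\<in>{\<phi> \<in> S \<rightarrow>\<^sub>E \<Sigma>. restrict \<phi> U = \<psi>}. X S \<phi>)"

definition sherali_adams ::
  "nat \<Rightarrow> 'v set \<Rightarrow> 'a set \<Rightarrow> ('v set \<Rightarrow> ('v \<Rightarrow> 'a) \<Rightarrow> real) \<Rightarrow> bool" where
  "sherali_adams r V \<Sigma> X \<longleftrightarrow>
     (\<forall>S. S \<subseteq> V \<and> card S \<le> r \<longrightarrow> is_distr (X S) (S \<rightarrow>\<^sub>E \<Sigma>)) \<and>
     (\<forall>S1 S2 \<psi>. S1 \<subseteq> V \<and> S2 \<subseteq> V \<and> card S1 \<le> r \<and> card S2 \<le> r \<and> \<psi> \<in> (S1 \<inter> S2) \<rightarrow>\<^sub>E \<Sigma>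
        \<longrightarrow> marg X \<Sigma> S1 (S1 \<inter> S2) \<psi> = marg X \<Sigma> S2 (S1 \<inter> S2) \<psi>)"

definition merge :: "'v set \<Rightarrow> ('v \<Rightarrow> 'a) \<Rightarrow> ('v \<Rightarrow> 'a) \<Rightarrow> ('v \<Rightarrow> 'a)" where
  "merge S \<phi>S \<phi>T = (\<lambda>x. if x \<in> S then \<phi>S x else \<phi>T x)"

definition cond ::
  "('v set \<Rightarrow> ('v \<Rightarrow> 'a) \<Rightarrow> real) \<Rightarrow> 'v set \<Rightarrow> ('v \<Rightarrow> 'a) \<Rightarrow> ('v set \<Rightarrow> ('v \<Rightarrow> 'a) \<Rightarrow> real)" where
  "cond X T \<phi>T = (\<lambda>S \<phi>S. if (\<forall>x\<in>S \<inter> T. \<phi>S x = \<phi>T x)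
       then X (S \<union> T) (merge S \<phi>S \<phi>T) / X T \<phi>T else 0)"

definition joint_law ::
  "('v set \<Rightarrow> ('v \<Rightarrow> 'a) \<Rightarrow> real) \<Rightarrow> 'a set \<Rightarrow> 'v list \<Rightarrow> 'a list \<Rightarrow> real" where
  "joint_law X \<Sigma> xs a = (\<Sum>\<phi>\<in>{\<phi> \<in> set xs \<rightarrow>\<^sub>E \<Sigma>. map \<phi> xs = a}. X (set xs) \<phi>)"

definition coord_law ::
  "('v set \<Rightarrow> ('v \<Rightarrow> 'a) \<Rightarrow> real) \<Rightarrow> 'a set \<Rightarrow> 'v list \<Rightarrow> nat \<Rightarrow> 'a \<Rightarrow> real" where
  "coord_law X \<Sigma> xs j b = (\<Sum>\<phi>\<in>{\<phi> \<in> set xs \<rightarrow>\<^sub>E \<Sigma>. \<phi> (xs ! j) = b}. X (set xs) \<phi>)"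

definition total_corr ::
  "('v set \<Rightarrow> ('v \<Rightarrow> 'a) \<Rightarrow> real) \<Rightarrow> 'a set \<Rightarrow> 'v list \<Rightarrow> real" where
  "total_corr X \<Sigma> xs =
     (\<Sum>a\<in>tuples \<Sigma> (length xs).
        if 0 < joint_law X \<Sigma> xs a
        then joint_law X \<Sigma> xs a *
             ln (joint_law X \<Sigma> xs a / (\<Prod>j<length xs. coord_law X \<Sigma> xs j (a ! j)))
        else 0)"

definition csp_corr ::
  "('v list \<Rightarrow> real) \<Rightarrow> 'v set \<Rightarrow> 'a set \<Rightarrow> nat \<Rightarrow> ('v set \<Rightarrow> ('v \<Rightarrow> 'a) \<Rightarrow> real) \<Rightarrow> real" where
  "csp_corr W V \<Sigma> k X = (\<Sum>S\<in>tuples V k. W S * total_corr X \<Sigma> S)"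

definition exp_cond_corr ::
  "('v list \<Rightarrow> real) \<Rightarrow> 'v set \<Rightarrow> 'a set \<Rightarrow> nat \<Rightarrow> ('v set \<Rightarrow> ('v \<Rightarrow> 'a) \<Rightarrow> real) \<Rightarrow> nat \<Rightarrow> real" where
  "exp_cond_corr W V \<Sigma> k X t =
     (1 / real (card V) ^ t) *
     (\<Sum>T\<in>tuples V t. \<Sum>\<phi>\<in>set T \<rightarrow>\<^sub>E \<Sigma>.
        if 0 < X (set T) \<phi> then X (set T) \<phi> * csp_corr W V \<Sigma> k (cond X (set T) \<phi>) else 0)"

end

theory Submission
  imports Defs
begin

locale SA =
  fixes r :: nat and V :: "'v set" and \<Sigma> :: "'a set" and X :: "'v set \<Rightarrow> ('v \<Rightarrow> 'a) \<Rightarrow> real"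
  assumes SA: "sherali_adams r V \<Sigma> X" and finV: "finite V" and finS: "finite \<Sigma>"
begin

lemma distr:
  assumes "S \<subseteq> V" "card S \<le> r"
  shows "\<And>\<phi>. \<phi> \<in> S \<rightarrow>\<^sub>E \<Sigma> \<Longrightarrow> 0 \<le> X S \<phi>" "(\<Sum>\<phi>\<in>S \<rightarrow>\<^sub>E \<Sigma>. X S \<phi>) = 1"
  using SA assms unfolding sherali_adams_def is_distr_def by auto

lemma card_le: assumes "A \<subseteq> B" "B \<subseteq> V" shows "card A \<le> card B"
  using assms finV by (meson card_mono finite_subset)

lemma finPiE: "finite A \<Longrightarrow> finite (A \<rightarrow>\<^sub>E \<Sigma>)"
  using finS by (simp add: finite_PiE)

lemma marg_eq:
  assumes "A \<subseteq> B" "B \<subseteq> V" "card B \<le> r" "\<psi> \<in> A \<rightarrow>\<^sub>E \<Sigma>"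
  shows "(\<Sum>\<chi>\<in>{\<chi>\<in>B \<rightarrow>\<^sub>E \<Sigma>. restrict \<chi> A = \<psi>}. X B \<chi>) = X A \<psi>"
proof -
  have cA: "card A \<le> r" using card_le[OF assms(1,2)] assms(3) by simp
  have AV: "A \<subseteq> V" using assms by auto
  have "marg X \<Sigma> B (B \<inter> A) \<psi> = marg X \<Sigma> A (B \<inter> A) \<psi>"
    using SA assms cA AV unfolding sherali_adams_def by (metis Int_absorb1)
  moreover have "B \<inter> A = A" using assms by auto
  moreover have "{\<phi> \<in> A \<rightarrow>\<^sub>E \<Sigma>. restrict \<phi> A = \<psi>} = {\<psi>}" using assms(4) by auto
  ultimately show ?thesis unfolding marg_def by simp
qed

lemma M:
  assumes "A \<subseteq> B" "B \<subseteq> V" "card B \<le> r"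
  shows "(\<Sum>\<chi>\<in>B \<rightarrow>\<^sub>E \<Sigma>. X B \<chi> * g (restrict \<chi> A)) = (\<Sum>\<psi>\<in>A \<rightarrow>\<^sub>E \<Sigma>. X A \<psi> * g \<psi>)"
proof -
  have fB: "finite B" using assms finV finite_subset by blast
  have fA: "finite A" using assms fB finite_subset by blast
  have im: "(\<lambda>\<chi>. restrict \<chi> A) ` (B \<rightarrow>\<^sub>E \<Sigma>) \<subseteq> A \<rightarrow>\<^sub>E \<Sigma>" using assms(1) by (auto simp: PiE_iff)
  have "(\<Sum>\<chi>\<in>B \<rightarrow>\<^sub>E \<Sigma>. X B \<chi> * g (restrict \<chi> A)) =
     (\<Sum>\<psi>\<in>A \<rightarrow>\<^sub>E \<Sigma>. \<Sum>\<chi>\<in>{\<chi>. \<chi> \<in> B \<rightarrow>\<^sub>E \<Sigma> \<and> restrict \<chi> A = \<psi>}. X B \<chi> * g (restrict \<chi> A))"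
    by (rule sum.group[symmetric, OF finPiE[OF fB] finPiE[OF fA] im])
  also have "\<dots> = (\<Sum>\<psi>\<in>A \<rightarrow>\<^sub>E \<Sigma>. (\<Sum>\<chi>\<in>{\<chi>\<in>B \<rightarrow>\<^sub>E \<Sigma>. restrict \<chi> A = \<psi>}. X B \<chi>) * g \<psi>)"
    by (rule sum.cong) (auto simp: sum_distrib_right)
  also have "\<dots> = (\<Sum>\<psi>\<in>A \<rightarrow>\<^sub>E \<Sigma>. X A \<psi> * g \<psi>)"
    by (rule sum.cong) (auto simp: marg_eq[OF assms])
  finally show ?thesis .
qed

lemma Mle:
  assumes "A \<subseteq> B" "B \<subseteq> V" "card B \<le> r" "\<chi> \<in> B \<rightarrow>\<^sub>E \<Sigma>"
  shows "X B \<chi> \<le> X A (restrict \<chi> A)"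
proof -
  have fB: "finite B" using assms finV finite_subset by blast
  have r: "restrict \<chi> A \<in> A \<rightarrow>\<^sub>E \<Sigma>" using assms by (auto simp: PiE_iff)
  have "X B \<chi> \<le> (\<Sum>\<chi>'\<in>{\<chi>'\<in>B \<rightarrow>\<^sub>E \<Sigma>. restrict \<chi>' A = restrict \<chi> A}. X B \<chi>')"
    by (rule member_le_sum) (use assms distr[OF assms(2,3)] finPiE[OF fB] in auto)
  also have "\<dots> = X A (restrict \<chi> A)" by (rule marg_eq[OF assms(1-3) r])
  finally show ?thesis .
qed

end


lemma fin_tuples: "finite A \<Longrightarrow> finite (tuples A n)"
  unfolding tuples_def by (rule finite_lists_length_eq)

lemma card_tuples: "finite A \<Longrightarrow> card (tuples A n) = card A ^ n"
  unfolding tuples_def by (rule card_lists_length_eq)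

lemma tuples_Suc: "tuples A (Suc n) = (\<lambda>(a,xs). a#xs) ` (A \<times> tuples A n)"
  unfolding tuples_def by (auto simp: image_iff length_Suc_conv)

lemma inj_Cons: "inj_on (\<lambda>(a,xs). a#xs) S" by (auto simp: inj_on_def)

lemma sum_tuples_Suc:
  "sum f (tuples A (Suc n)) = (\<Sum>a\<in>A. \<Sum>xs\<in>tuples A n. f (a#xs))"
  unfolding tuples_Suc by (subst sum.reindex[OF inj_Cons]) (simp add: sum.cartesian_product case_prod_unfold)

lemma prod_tuples:
  fixes f :: "nat \<Rightarrow> 'a \<Rightarrow> real"
  shows "(\<Sum>a\<in>tuples S n. \<Prod>j<n. f j (a!j)) = (\<Prod>j<n. \<Sum>b\<in>S. f j b)"
proof (induction n arbitrary: f)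
  case 0
  have "tuples S 0 = {[]}" by (auto simp: tuples_def)
  then show ?case by simp
next
  case (Suc n)
  have "(\<Sum>a\<in>tuples S (Suc n). \<Prod>j<Suc n. f j (a!j))
     = (\<Sum>b\<in>S. \<Sum>xs\<in>tuples S n. f 0 b * (\<Prod>j<n. f (Suc j) (xs!j)))"
    by (simp only: sum_tuples_Suc prod.lessThan_Suc_shift nth_Cons_0 nth_Cons_Suc)
  also have "\<dots> = (\<Sum>b\<in>S. f 0 b) * (\<Sum>xs\<in>tuples S n. (\<Prod>j<n. f (Suc j) (xs!j)))"
    by (rule sum_product[symmetric])
  also have "\<dots> = (\<Sum>b\<in>S. f 0 b) * (\<Prod>j<n. \<Sum>b\<in>S. f (Suc j) b)"
    using Suc[of "\<lambda>j. f (Suc j)"] by simp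
  also have "\<dots> = (\<Prod>j<Suc n. \<Sum>b\<in>S. f j b)"
    by (simp only: prod.lessThan_Suc_shift)
  finally show ?case .
qed

context SA begin

declare [[show_types=false]]

lemma map_tuples: "\<psi> \<in> set xs \<rightarrow>\<^sub>E \<Sigma> \<Longrightarrow> map \<psi> xs \<in> tuples \<Sigma> (length xs)"
  by (auto simp: tuples_def PiE_iff)

lemma L1:
  fixes Y :: "'v set \<Rightarrow> ('v \<Rightarrow> 'a) \<Rightarrow> real" and xs :: "'v list"
  shows "(\<Sum>a\<in>tuples \<Sigma> (length xs). joint_law Y \<Sigma> xs a * g a)
       = (\<Sum>\<psi>\<in>set xs \<rightarrow>\<^sub>E \<Sigma>. Y (set xs) \<psi> * g (map \<psi> xs))"
proof -
  have "(\<Sum>\<psi>\<in>set xs \<rightarrow>\<^sub>E \<Sigma>. Y (set xs) \<psi> * g (map \<psi> xs)) =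
    (\<Sum>a\<in>tuples \<Sigma> (length xs). \<Sum>\<psi>\<in>{\<psi>. \<psi> \<in> set xs \<rightarrow>\<^sub>E \<Sigma> \<and> map \<psi> xs = a}. Y (set xs) \<psi> * g (map \<psi> xs))"
    by (rule sum.group[symmetric]) (use finPiE fin_tuples finS map_tuples in auto)
  also have "\<dots> = (\<Sum>a\<in>tuples \<Sigma> (length xs). joint_law Y \<Sigma> xs a * g a)"
    unfolding joint_law_def by (rule sum.cong) (auto simp: sum_distrib_right)
  finally show ?thesis by simp
qed

lemma Jmap: fixes Y :: "'v set \<Rightarrow> ('v \<Rightarrow> 'a) \<Rightarrow> real" and xs :: "'v list"
 shows "\<psi> \<in> set xs \<rightarrow>\<^sub>E \<Sigma> \<Longrightarrow> joint_law Y \<Sigma> xs (map \<psi> xs) = Y (set xs) \<psi>"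
proof -
  assume h: "\<psi> \<in> set xs \<rightarrow>\<^sub>E \<Sigma>"
  have "{\<phi> \<in> set xs \<rightarrow>\<^sub>E \<Sigma>. map \<phi> xs = map \<psi> xs} = {\<psi>}"
    using h by (auto intro: PiE_ext simp: map_eq_conv)
  then show ?thesis unfolding joint_law_def by simp
qed

lemma J_nonneg:
  fixes Y :: "'v set \<Rightarrow> ('v \<Rightarrow> 'a) \<Rightarrow> real" and xs :: "'v list"
  assumes "\<And>\<psi>. \<psi> \<in> set xs \<rightarrow>\<^sub>E \<Sigma> \<Longrightarrow> 0 \<le> Y (set xs) \<psi>"
  shows "0 \<le> joint_law Y \<Sigma> xs a"
  unfolding joint_law_def using assms by (auto intro: sum_nonneg)

lemma coord_ge:
  fixes Y :: "'v set \<Rightarrow> ('v \<Rightarrow> 'a) \<Rightarrow> real" and xs :: "'v list"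
  assumes "\<And>\<psi>. \<psi> \<in> set xs \<rightarrow>\<^sub>E \<Sigma> \<Longrightarrow> 0 \<le> Y (set xs) \<psi>" "j < length xs"
  shows "joint_law Y \<Sigma> xs a \<le> coord_law Y \<Sigma> xs j (a!j)"
  unfolding joint_law_def coord_law_def
  by (rule sum_mono2) (use assms finPiE[of "set xs"] in \<open>auto intro: finite_subset[OF _ finPiE[of "set xs"]]\<close>)

lemma coord_sum:
  fixes Y :: "'v set \<Rightarrow> ('v \<Rightarrow> 'a) \<Rightarrow> real" and xs :: "'v list"
  assumes "j < length xs"
  shows "(\<Sum>b\<in>\<Sigma>. coord_law Y \<Sigma> xs j b) = (\<Sum>\<psi>\<in>set xs \<rightarrow>\<^sub>E \<Sigma>. Y (set xs) \<psi>)"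
  unfolding coord_law_def
  by (rule sum.group) (use assms finPiE finS in \<open>auto simp: PiE_iff\<close>)

lemma TCid:
  fixes Y :: "'v set \<Rightarrow> ('v \<Rightarrow> 'a) \<Rightarrow> real" and xs :: "'v list"
  assumes nn: "\<And>\<psi>. \<psi> \<in> set xs \<rightarrow>\<^sub>E \<Sigma> \<Longrightarrow> 0 \<le> Y (set xs) \<psi>"
  shows "total_corr Y \<Sigma> xs = (\<Sum>\<psi>\<in>set xs \<rightarrow>\<^sub>E \<Sigma>. Y (set xs) \<psi> *
     (ln (Y (set xs) \<psi>) - (\<Sum>j<length xs. ln (coord_law Y \<Sigma> xs j (\<psi> (xs!j))))))"
proof -
  let ?J = "joint_law Y \<Sigma> xs"
  let ?g = "\<lambda>a. ln (?J a) - (\<Sum>j<length xs. ln (coord_law Y \<Sigma> xs j (a!j)))"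
  have "total_corr Y \<Sigma> xs = (\<Sum>a\<in>tuples \<Sigma> (length xs). ?J a * ?g a)"
    unfolding total_corr_def
  proof (rule sum.cong[OF refl])
    fix a assume a: "a \<in> tuples \<Sigma> (length xs)"
    show "(if 0 < ?J a then ?J a * ln (?J a / (\<Prod>j<length xs. coord_law Y \<Sigma> xs j (a ! j))) else 0)
       = ?J a * ?g a"
    proof (cases "0 < ?J a")
      case True
      have pos: "\<And>j. j \<in> {..<length xs} \<Longrightarrow> 0 < coord_law Y \<Sigma> xs j (a!j)"
        using coord_ge[of xs Y, OF nn] True by (meson lessThan_iff order_less_le_trans)
      have "ln (?J a / (\<Prod>j<length xs. coord_law Y \<Sigma> xs j (a ! j)))
          = ln (?J a) - ln (\<Prod>j<length xs. coord_law Y \<Sigma> xs j (a ! j))"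
        using True pos by (intro ln_divide_pos) (auto intro: prod_pos)
      also have "ln (\<Prod>j<length xs. coord_law Y \<Sigma> xs j (a ! j)) = (\<Sum>j<length xs. ln (coord_law Y \<Sigma> xs j (a!j)))"
        using pos by (intro ln_prod) force+
      finally show ?thesis using True by simp
    next
      case False
      then have "?J a = 0" using J_nonneg[where Y=Y and xs=xs and a=a, OF nn] by simp
      then show ?thesis by simp
    qed
  qed
  also have "\<dots> = (\<Sum>\<psi>\<in>set xs \<rightarrow>\<^sub>E \<Sigma>. Y (set xs) \<psi> * ?g (map \<psi> xs))" by (rule L1)
  also have "\<dots> = (\<Sum>\<psi>\<in>set xs \<rightarrow>\<^sub>E \<Sigma>. Y (set xs) \<psi> *
     (ln (Y (set xs) \<psi>) - (\<Sum>j<length xs. ln (coord_law Y \<Sigma> xs j (\<psi> (xs!j))))))"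
    by (rule sum.cong) (auto simp: Jmap)
  finally show ?thesis .
qed

lemma KL:
  fixes Y :: "'v set \<Rightarrow> ('v \<Rightarrow> 'a) \<Rightarrow> real" and xs :: "'v list"
  assumes nn: "\<And>\<psi>. \<psi> \<in> set xs \<rightarrow>\<^sub>E \<Sigma> \<Longrightarrow> 0 \<le> Y (set xs) \<psi>"
    and s1: "(\<Sum>\<psi>\<in>set xs \<rightarrow>\<^sub>E \<Sigma>. Y (set xs) \<psi>) = 1"
  shows "0 \<le> total_corr Y \<Sigma> xs"
proof -
  let ?J = "joint_law Y \<Sigma> xs"
  let ?Q = "\<lambda>a. \<Prod>j<length xs. coord_law Y \<Sigma> xs j (a ! j)"
  have cnn: "\<And>j b. 0 \<le> coord_law Y \<Sigma> xs j b" unfolding coord_law_def using nn by (auto intro: sum_nonneg)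
  have Qnn: "\<And>a. 0 \<le> ?Q a" using cnn by (auto intro: prod_nonneg)
  have sJ: "(\<Sum>a\<in>tuples \<Sigma> (length xs). ?J a) = 1" using L1[of Y xs "\<lambda>_. 1"] s1 by simp
  have sQ: "(\<Sum>a\<in>tuples \<Sigma> (length xs). ?Q a) = 1"
    using prod_tuples[where f="\<lambda>j b. coord_law Y \<Sigma> xs j b" and S=\<Sigma> and n="length xs"] coord_sum[where Y=Y and xs=xs] s1 by simp
  have "(\<Sum>a\<in>tuples \<Sigma> (length xs). ?J a - ?Q a) \<le> total_corr Y \<Sigma> xs"
    unfolding total_corr_def
  proof (rule sum_mono)
    fix a assume a: "a \<in> tuples \<Sigma> (length xs)"
    show "?J a - ?Q a \<le> (if 0 < ?J a then ?J a * ln (?J a / ?Q a) else 0)"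
    proof (cases "0 < ?J a")
      case True
      have pos: "\<And>j. j \<in> {..<length xs} \<Longrightarrow> 0 < coord_law Y \<Sigma> xs j (a!j)"
        using coord_ge[of xs Y, OF nn] True by (meson lessThan_iff order_less_le_trans)
      have Qp: "0 < ?Q a" using pos by (auto intro: prod_pos)
      have "ln (?Q a / ?J a) \<le> ?Q a / ?J a - 1" using Qp True by (intro ln_le_minus_one) simp
      moreover have "ln (?J a / ?Q a) = - ln (?Q a / ?J a)" using Qp True by (simp add: ln_divide_pos)
      ultimately have "?J a * (1 - ?Q a / ?J a) \<le> ?J a * ln (?J a / ?Q a)"
        using True by (intro mult_left_mono) auto
      then show ?thesis using True by (simp add: algebra_simps)
    next
      case False
      then show ?thesis using J_nonneg[where Y=Y and xs=xs and a=a, OF nn] Qnn[of a] by simp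
    qed
  qed
  moreover have "(\<Sum>a\<in>tuples \<Sigma> (length xs). ?J a - ?Q a) = 0"
    by (simp add: sum_subtractf sJ sQ)
  ultimately show ?thesis by simp
qed

end


context SA begin

definition fib :: "'v set \<Rightarrow> 'v set \<Rightarrow> ('v \<Rightarrow> 'a) \<Rightarrow> ('v \<Rightarrow> 'a) set" where
  "fib B T \<phi> = {\<chi>\<in>B \<rightarrow>\<^sub>E \<Sigma>. restrict \<chi> T = \<phi>}"

lemma merge_restrict:
  assumes "\<chi> \<in> (A \<union> T) \<rightarrow>\<^sub>E \<Sigma>" "restrict \<chi> T = \<phi>"
  shows "merge A (restrict \<chi> A) \<phi> = \<chi>"
proof
  fix x show "merge A (restrict \<chi> A) \<phi> x = \<chi> x"
    using assms unfolding merge_def by (auto simp: PiE_iff extensional_def restrict_def)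
qed

lemma merge_PiE:
  assumes "\<psi> \<in> A \<rightarrow>\<^sub>E \<Sigma>" "\<phi> \<in> T \<rightarrow>\<^sub>E \<Sigma>"
  shows "merge A \<psi> \<phi> \<in> (A \<union> T) \<rightarrow>\<^sub>E \<Sigma>"
  using assms unfolding merge_def by (auto simp: PiE_iff extensional_def)

lemma restrict_merge_A:
  assumes "\<psi> \<in> A \<rightarrow>\<^sub>E \<Sigma>" shows "restrict (merge A \<psi> \<phi>) A = \<psi>"
  using assms unfolding merge_def by (auto simp: PiE_iff extensional_def restrict_def)

lemma restrict_merge_T:
  assumes "\<psi> \<in> A \<rightarrow>\<^sub>E \<Sigma>" "\<phi> \<in> T \<rightarrow>\<^sub>E \<Sigma>" "\<forall>x\<in>A \<inter> T. \<psi> x = \<phi> x"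
  shows "restrict (merge A \<psi> \<phi>) T = \<phi>"
  using assms unfolding merge_def by (auto simp: PiE_iff extensional_def restrict_def)

lemma Bij:
  assumes "\<phi> \<in> T \<rightarrow>\<^sub>E \<Sigma>" "finite A"
  shows "(\<Sum>\<psi>\<in>A \<rightarrow>\<^sub>E \<Sigma>. if (\<forall>x\<in>A \<inter> T. \<psi> x = \<phi> x) then F \<psi> else 0)
       = (\<Sum>\<chi>\<in>fib (A \<union> T) T \<phi>. F (restrict \<chi> A))"
proof -
  have "(\<Sum>\<psi>\<in>A \<rightarrow>\<^sub>E \<Sigma>. if (\<forall>x\<in>A \<inter> T. \<psi> x = \<phi> x) then F \<psi> else 0)
      = (\<Sum>\<psi>\<in>{\<psi>\<in>A \<rightarrow>\<^sub>E \<Sigma>. \<forall>x\<in>A \<inter> T. \<psi> x = \<phi> x}. F \<psi>)"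
    by (rule sum.inter_filter[symmetric]) (rule finPiE[OF assms(2)])
  also have "\<dots> = (\<Sum>\<chi>\<in>fib (A \<union> T) T \<phi>. F (restrict \<chi> A))"
  proof (rule sum.reindex_bij_witness[where i="\<lambda>\<chi>. restrict \<chi> A" and j="\<lambda>\<psi>. merge A \<psi> \<phi>"])
    fix \<psi> assume h: "\<psi> \<in> {\<psi> \<in> A \<rightarrow>\<^sub>E \<Sigma>. \<forall>x\<in>A \<inter> T. \<psi> x = \<phi> x}"
    then show "restrict (merge A \<psi> \<phi>) A = \<psi>" "F (restrict (merge A \<psi> \<phi>) A) = F \<psi>"
      using restrict_merge_A[of \<psi> A \<phi>] h by auto
    show "merge A \<psi> \<phi> \<in> fib (A \<union> T) T \<phi>"
      unfolding fib_def using h merge_PiE[OF _ assms(1)] restrict_merge_T[OF _ assms(1)] by blast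
  next
    fix \<chi> assume h: "\<chi> \<in> fib (A \<union> T) T \<phi>"
    then show "merge A (restrict \<chi> A) \<phi> = \<chi>" using merge_restrict unfolding fib_def by auto
    show "restrict \<chi> A \<in> {\<psi> \<in> A \<rightarrow>\<^sub>E \<Sigma>. \<forall>x\<in>A \<inter> T. \<psi> x = \<phi> x}"
    proof -
      have 1: "restrict \<chi> A \<in> A \<rightarrow>\<^sub>E \<Sigma>" using h unfolding fib_def
        by (intro restrict_PiE[THEN iffD2]) (auto simp: PiE_iff)
      have "\<forall>x\<in>A \<inter> T. restrict \<chi> A x = \<phi> x"
      proof
        fix x assume x: "x \<in> A \<inter> T"
        have "\<phi> x = restrict \<chi> T x" using h unfolding fib_def by auto
        then show "restrict \<chi> A x = \<phi> x" using x by simp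
      qed
      then show ?thesis using 1 by blast
    qed
  qed
  finally show ?thesis .
qed

lemma condsum:
  assumes "\<phi> \<in> T \<rightarrow>\<^sub>E \<Sigma>" "finite A"
  shows "(\<Sum>\<psi>\<in>A \<rightarrow>\<^sub>E \<Sigma>. cond X T \<phi> A \<psi> * G \<psi>)
       = (\<Sum>\<chi>\<in>fib (A \<union> T) T \<phi>. X (A \<union> T) \<chi> * G (restrict \<chi> A)) / X T \<phi>"
proof -
  have "(\<Sum>\<psi>\<in>A \<rightarrow>\<^sub>E \<Sigma>. cond X T \<phi> A \<psi> * G \<psi>)
      = (\<Sum>\<psi>\<in>A \<rightarrow>\<^sub>E \<Sigma>. if (\<forall>x\<in>A \<inter> T. \<psi> x = \<phi> x) then X (A \<union> T) (merge A \<psi> \<phi>) / X T \<phi> * G \<psi> else 0)"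
    unfolding cond_def by (rule sum.cong) auto
  also have "\<dots> = (\<Sum>\<chi>\<in>fib (A \<union> T) T \<phi>. X (A \<union> T) (merge A (restrict \<chi> A) \<phi>) / X T \<phi> * G (restrict \<chi> A))"
    by (rule Bij[OF assms])
  also have "\<dots> = (\<Sum>\<chi>\<in>fib (A \<union> T) T \<phi>. X (A \<union> T) \<chi> * G (restrict \<chi> A)) / X T \<phi>"
    unfolding sum_divide_distrib
    by (rule sum.cong) (auto simp: fib_def merge_restrict)
  finally show ?thesis .
qed

lemma fib_sum:
  assumes "T \<subseteq> B" "B \<subseteq> V" "card B \<le> r" "\<phi> \<in> T \<rightarrow>\<^sub>E \<Sigma>"
  shows "(\<Sum>\<chi>\<in>fib B T \<phi>. X B \<chi>) = X T \<phi>"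
  using marg_eq[OF assms] unfolding fib_def by simp

end


context SA begin

lemma fin_fib: "finite B \<Longrightarrow> finite (fib B T \<phi>)"
  unfolding fib_def by (rule finite_subset[OF _ finPiE]) auto

lemma Ynn:
  assumes "T \<subseteq> V" "set xs \<subseteq> V" "card (set xs \<union> T) \<le> r"
    "\<phi> \<in> T \<rightarrow>\<^sub>E \<Sigma>" "0 < X T \<phi>" "\<psi> \<in> set xs \<rightarrow>\<^sub>E \<Sigma>"
  shows "0 \<le> cond X T \<phi> (set xs) \<psi>"
proof -
  have "merge (set xs) \<psi> \<phi> \<in> (set xs \<union> T) \<rightarrow>\<^sub>E \<Sigma>" using merge_PiE assms(4,6) by blast
  moreover have sub: "set xs \<union> T \<subseteq> V" using assms(1,2) by blast
  ultimately have "0 \<le> X (set xs \<union> T) (merge (set xs) \<psi> \<phi>)"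
    using distr(1)[OF sub assms(3)] by blast
  then show ?thesis unfolding cond_def using assms(5) by simp
qed

lemma Ysum:
  assumes "T \<subseteq> V" "set xs \<subseteq> V" "card (set xs \<union> T) \<le> r"
    "\<phi> \<in> T \<rightarrow>\<^sub>E \<Sigma>" "0 < X T \<phi>"
  shows "(\<Sum>\<psi>\<in>set xs \<rightarrow>\<^sub>E \<Sigma>. cond X T \<phi> (set xs) \<psi>) = 1"
  using condsum[OF assms(4), of "set xs" "\<lambda>_. 1"] fib_sum[of T "set xs \<union> T" \<phi>] assms by simp

lemma coordphi:
  assumes "T \<subseteq> V" "set xs \<subseteq> V" "card (set xs \<union> T) \<le> r"
    "\<phi> \<in> T \<rightarrow>\<^sub>E \<Sigma>" "j < length xs" "\<chi> \<in> fib (set xs \<union> T) T \<phi>"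
  shows "coord_law (cond X T \<phi>) \<Sigma> xs j (\<chi> (xs!j))
       = X (insert (xs!j) T) (restrict \<chi> (insert (xs!j) T)) / X T \<phi>"
proof -
  let ?A = "set xs" and ?B = "set xs \<union> T" and ?C = "insert (xs!j) T" and ?b = "\<chi> (xs!j)"
  have xj: "xs!j \<in> ?A" using assms by simp
  have seteq: "{\<chi>'\<in>fib ?B T \<phi>. \<chi>' (xs!j) = ?b} = fib ?B ?C (restrict \<chi> ?C)" (is "?L = ?R")
  proof -
    have rT: "restrict \<chi> T = \<phi>" using assms(6) unfolding fib_def by simp
    have "\<chi>' \<in> ?L \<longleftrightarrow> \<chi>' \<in> ?R" for \<chi>'
    proof
      assume "\<chi>' \<in> ?L"
      then have h: "\<chi>' \<in> ?B \<rightarrow>\<^sub>E \<Sigma>" "restrict \<chi>' T = \<phi>" "\<chi>' (xs ! j) = \<chi> (xs ! j)" unfolding fib_def by auto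
      have "restrict \<chi>' ?C = restrict \<chi> ?C"
      proof
        fix x show "restrict \<chi>' ?C x = restrict \<chi> ?C x"
        proof (cases "x \<in> T")
          case True
          then have "\<chi>' x = restrict \<chi>' T x" "\<chi> x = restrict \<chi> T x" by auto
          then show ?thesis using h(2) rT True by simp
        qed (use h(3) in auto)
      qed
      then show "\<chi>' \<in> ?R" using h(1) unfolding fib_def by simp
    next
      assume "\<chi>' \<in> ?R"
      then have h: "\<chi>' \<in> ?B \<rightarrow>\<^sub>E \<Sigma>" "restrict \<chi>' ?C = restrict \<chi> ?C" unfolding fib_def by auto
      have "\<chi>' (xs!j) = restrict \<chi>' ?C (xs!j)" by simp
      also have "\<dots> = \<chi> (xs!j)" using h by simp
      finally have 1: "\<chi>' (xs!j) = \<chi> (xs!j)" .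
      have "restrict \<chi>' T = restrict (restrict \<chi>' ?C) T" by (simp add: Int_absorb1 subset_insertI)
      also have "\<dots> = restrict \<chi> T" using h by (simp add: Int_absorb1 subset_insertI)
      finally show "\<chi>' \<in> ?L" using 1 rT h(1) unfolding fib_def by simp
    qed
    then show ?thesis by blast
  qed
  have fs: "(\<Sum>\<chi>'\<in>fib ?B ?C (restrict \<chi> ?C). X ?B \<chi>') = X ?C (restrict \<chi> ?C)"
  proof (rule fib_sum)
    show "?C \<subseteq> ?B" using xj by auto
    show "?B \<subseteq> V" using assms(1,2) by auto
    show "card ?B \<le> r" by (rule assms(3))
    have "\<chi> \<in> ?B \<rightarrow>\<^sub>E \<Sigma>" using assms(6) unfolding fib_def by blast
    then show "restrict \<chi> ?C \<in> ?C \<rightarrow>\<^sub>E \<Sigma>" using xj by (intro restrict_PiE[THEN iffD2]) (auto simp: PiE_iff)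
  qed
  have "coord_law (cond X T \<phi>) \<Sigma> xs j ?b
      = (\<Sum>\<psi>\<in>?A \<rightarrow>\<^sub>E \<Sigma>. cond X T \<phi> ?A \<psi> * (if \<psi> (xs!j) = ?b then 1 else 0))"
    unfolding coord_law_def by (simp add: sum.inter_filter[OF finPiE] if_distrib cong: if_cong)
  also have "\<dots> = (\<Sum>\<chi>'\<in>fib ?B T \<phi>. X ?B \<chi>' * (if restrict \<chi>' ?A (xs!j) = ?b then 1 else 0)) / X T \<phi>"
    by (rule condsum[OF assms(4)]) simp
  also have "\<dots> = (\<Sum>\<chi>'\<in>{\<chi>'\<in>fib ?B T \<phi>. \<chi>' (xs!j) = ?b}. X ?B \<chi>') / X T \<phi>"
  proof -
    have fB: "finite ?B" using assms(1) finV finite_subset by blast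
    show ?thesis
      by (subst sum.inter_filter[OF fin_fib[OF fB]], rule arg_cong[where f="\<lambda>s. s / X T \<phi>"], rule sum.cong)
         (use xj in auto)
  qed
  finally have c: "coord_law (cond X T \<phi>) \<Sigma> xs j ?b = (\<Sum>\<chi>'\<in>{\<chi>'\<in>fib ?B T \<phi>. \<chi>' (xs!j) = ?b}. X ?B \<chi>') / X T \<phi>" .
  show ?thesis using c unfolding seteq fs .
qed

end


context SA begin

lemma cons_restrict:
  assumes "\<chi> \<in> fib (A \<union> T) T \<phi>"
  shows "\<forall>x\<in>A \<inter> T. restrict \<chi> A x = \<phi> x"
proof
  fix x assume x: "x \<in> A \<inter> T"
  have "\<phi> x = restrict \<chi> T x" using assms unfolding fib_def by auto
  then show "restrict \<chi> A x = \<phi> x" using x by simp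
qed

lemma Yrestrict:
  assumes "\<chi> \<in> fib (set xs \<union> T) T \<phi>"
  shows "cond X T \<phi> (set xs) (restrict \<chi> (set xs)) = X (set xs \<union> T) \<chi> / X T \<phi>"
proof -
  have c: "\<forall>x\<in>set xs \<inter> T. restrict \<chi> (set xs) x = \<phi> x" by (rule cons_restrict[OF assms])
  have m: "merge (set xs) (restrict \<chi> (set xs)) \<phi> = \<chi>"
    using assms unfolding fib_def by (intro merge_restrict[where A="set xs" and T=T]) auto
  show ?thesis unfolding cond_def using c m by simp
qed

lemma TCphi:
  assumes "T \<subseteq> V" "set xs \<subseteq> V" "card (set xs \<union> T) \<le> r"
    "\<phi> \<in> T \<rightarrow>\<^sub>E \<Sigma>" "0 < X T \<phi>"
  shows "total_corr (cond X T \<phi>) \<Sigma> xs =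
    (\<Sum>\<chi>\<in>fib (set xs \<union> T) T \<phi>. X (set xs \<union> T) \<chi> *
       (ln (X (set xs \<union> T) \<chi> / X T \<phi>) -
        (\<Sum>j<length xs. ln (X (insert (xs!j) T) (restrict \<chi> (insert (xs!j) T)) / X T \<phi>)))) / X T \<phi>"
proof -
  let ?Y = "cond X T \<phi>"
  let ?G = "\<lambda>\<psi>. ln (?Y (set xs) \<psi>) - (\<Sum>j<length xs. ln (coord_law ?Y \<Sigma> xs j (\<psi> (xs!j))))"
  have "total_corr ?Y \<Sigma> xs = (\<Sum>\<psi>\<in>set xs \<rightarrow>\<^sub>E \<Sigma>. ?Y (set xs) \<psi> * ?G \<psi>)"
    by (rule TCid) (rule Ynn[OF assms])
  also have "\<dots> = (\<Sum>\<chi>\<in>fib (set xs \<union> T) T \<phi>. X (set xs \<union> T) \<chi> * ?G (restrict \<chi> (set xs))) / X T \<phi>"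
    by (rule condsum[OF assms(4)]) simp
  also have "\<dots> = (\<Sum>\<chi>\<in>fib (set xs \<union> T) T \<phi>. X (set xs \<union> T) \<chi> *
       (ln (X (set xs \<union> T) \<chi> / X T \<phi>) -
        (\<Sum>j<length xs. ln (X (insert (xs!j) T) (restrict \<chi> (insert (xs!j) T)) / X T \<phi>)))) / X T \<phi>"
  proof (rule arg_cong[where f="\<lambda>s. s / X T \<phi>"], rule sum.cong[OF refl])
    fix \<chi> assume h: "\<chi> \<in> fib (set xs \<union> T) T \<phi>"
    have 1: "?Y (set xs) (restrict \<chi> (set xs)) = X (set xs \<union> T) \<chi> / X T \<phi>" by (rule Yrestrict[OF h])
    have 2: "(\<Sum>j<length xs. ln (coord_law ?Y \<Sigma> xs j (restrict \<chi> (set xs) (xs!j)))) =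
       (\<Sum>j<length xs. ln (X (insert (xs!j) T) (restrict \<chi> (insert (xs!j) T)) / X T \<phi>))"
    proof (rule sum.cong[OF refl])
      fix j assume j: "j \<in> {..<length xs}"
      then have "restrict \<chi> (set xs) (xs!j) = \<chi> (xs!j)" by simp
      then show "ln (coord_law ?Y \<Sigma> xs j (restrict \<chi> (set xs) (xs!j))) =
         ln (X (insert (xs!j) T) (restrict \<chi> (insert (xs!j) T)) / X T \<phi>)"
        using coordphi[OF assms(1-4) _ h, of j] j by simp
    qed
    show "X (set xs \<union> T) \<chi> * ?G (restrict \<chi> (set xs)) = X (set xs \<union> T) \<chi> *
       (ln (X (set xs \<union> T) \<chi> / X T \<phi>) -
        (\<Sum>j<length xs. ln (X (insert (xs!j) T) (restrict \<chi> (insert (xs!j) T)) / X T \<phi>)))"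
      by (simp only: 1 2)
  qed
  finally show ?thesis .
qed

end


context SA begin

definition LL :: "'v set \<Rightarrow> 'v list \<Rightarrow> ('v \<Rightarrow> 'a) \<Rightarrow> real" where
  "LL T xs \<chi> = X (set xs \<union> T) \<chi> *
       (ln (X (set xs \<union> T) \<chi> / X T (restrict \<chi> T)) -
        (\<Sum>j<length xs. ln (X (insert (xs!j) T) (restrict \<chi> (insert (xs!j) T)) / X T (restrict \<chi> T))))"

lemma AGG:
  assumes "T \<subseteq> V" "set xs \<subseteq> V" "card (set xs \<union> T) \<le> r"
  shows "(\<Sum>\<phi>\<in>T \<rightarrow>\<^sub>E \<Sigma>. if 0 < X T \<phi> then X T \<phi> * total_corr (cond X T \<phi>) \<Sigma> xs else 0)
       = (\<Sum>\<chi>\<in>(set xs \<union> T) \<rightarrow>\<^sub>E \<Sigma>. LL T xs \<chi>)"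
proof -
  let ?B = "set xs \<union> T"
  have BV: "?B \<subseteq> V" using assms(1,2) by blast
  have TB: "T \<subseteq> ?B" by blast
  have cT: "card T \<le> r" using card_le[OF TB BV] assms(3) by linarith
  have fB: "finite ?B" using BV finV finite_subset by blast
  have fT: "finite T" using assms(1) finV finite_subset by blast
  have "(\<Sum>\<phi>\<in>T \<rightarrow>\<^sub>E \<Sigma>. if 0 < X T \<phi> then X T \<phi> * total_corr (cond X T \<phi>) \<Sigma> xs else 0)
      = (\<Sum>\<phi>\<in>T \<rightarrow>\<^sub>E \<Sigma>. \<Sum>\<chi>\<in>fib ?B T \<phi>. LL T xs \<chi>)"
  proof (rule sum.cong[OF refl])
    fix \<phi> assume \<phi>: "\<phi> \<in> T \<rightarrow>\<^sub>E \<Sigma>"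
    have fibeq: "\<And>\<chi>. \<chi> \<in> fib ?B T \<phi> \<Longrightarrow> restrict \<chi> T = \<phi>" unfolding fib_def by blast
    show "(if 0 < X T \<phi> then X T \<phi> * total_corr (cond X T \<phi>) \<Sigma> xs else 0) = (\<Sum>\<chi>\<in>fib ?B T \<phi>. LL T xs \<chi>)"
    proof (cases "0 < X T \<phi>")
      case True
      have "X T \<phi> * total_corr (cond X T \<phi>) \<Sigma> xs =
         (\<Sum>\<chi>\<in>fib ?B T \<phi>. X ?B \<chi> *
         (ln (X ?B \<chi> / X T \<phi>) -
         (\<Sum>j<length xs. ln (X (insert (xs!j) T) (restrict \<chi> (insert (xs!j) T)) / X T \<phi>))))"
        using TCphi[OF assms \<phi> True] True by simp
      also have "\<dots> = (\<Sum>\<chi>\<in>fib ?B T \<phi>. LL T xs \<chi>)"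
        unfolding LL_def by (rule sum.cong[OF refl]) (simp only: fibeq)
      finally show ?thesis using True by simp
    next
      case False
      have "0 \<le> X T \<phi>" using distr(1)[OF assms(1) cT \<phi>] .
      then have z: "X T \<phi> = 0" using False by linarith
      have "\<And>\<chi>. \<chi> \<in> fib ?B T \<phi> \<Longrightarrow> LL T xs \<chi> = 0"
      proof -
        fix \<chi> assume h: "\<chi> \<in> fib ?B T \<phi>"
        then have hB: "\<chi> \<in> ?B \<rightarrow>\<^sub>E \<Sigma>" unfolding fib_def by blast
        have "X ?B \<chi> \<le> X T (restrict \<chi> T)" by (rule Mle[OF TB BV assms(3) hB])
        moreover have "0 \<le> X ?B \<chi>" by (rule distr(1)[OF BV assms(3) hB])
        ultimately have "X ?B \<chi> = 0" using z fibeq[OF h] by simp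
        then show "LL T xs \<chi> = 0" unfolding LL_def by simp
      qed
      then show ?thesis using False by simp
    qed
  qed
  also have "\<dots> = (\<Sum>\<chi>\<in>?B \<rightarrow>\<^sub>E \<Sigma>. LL T xs \<chi>)"
    unfolding fib_def
    by (rule sum.group) (use finPiE[OF fB] finPiE[OF fT] TB in \<open>auto simp: PiE_iff\<close>)
  finally show ?thesis .
qed

lemma AGG_nonneg:
  assumes "T \<subseteq> V" "set xs \<subseteq> V" "card (set xs \<union> T) \<le> r"
  shows "0 \<le> (\<Sum>\<phi>\<in>T \<rightarrow>\<^sub>E \<Sigma>. if 0 < X T \<phi> then X T \<phi> * total_corr (cond X T \<phi>) \<Sigma> xs else 0)"
proof (rule sum_nonneg)
  fix \<phi> assume \<phi>: "\<phi> \<in> T \<rightarrow>\<^sub>E \<Sigma>"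
  show "0 \<le> (if 0 < X T \<phi> then X T \<phi> * total_corr (cond X T \<phi>) \<Sigma> xs else 0)"
  proof (cases "0 < X T \<phi>")
    case True
    have "0 \<le> total_corr (cond X T \<phi>) \<Sigma> xs"
      by (rule KL) (use Ynn[OF assms \<phi> True] Ysum[OF assms \<phi> True] in auto)
    then show ?thesis using True by simp
  qed simp
qed

end


context SA begin

definition CE :: "'v set \<Rightarrow> 'v \<Rightarrow> real" where
  "CE U a = - (\<Sum>\<zeta>\<in>insert a U \<rightarrow>\<^sub>E \<Sigma>. X (insert a U) \<zeta> * ln (X (insert a U) \<zeta> / X U (restrict \<zeta> U)))"

lemma partA:
  assumes "T \<subseteq> V" "set xs \<subseteq> V" "card (set xs \<union> T) \<le> r" "j < length xs"
  shows "(\<Sum>\<chi>\<in>(set xs \<union> T) \<rightarrow>\<^sub>E \<Sigma>. X (set xs \<union> T) \<chi> *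
     ln (X (insert (xs!j) T) (restrict \<chi> (insert (xs!j) T)) / X T (restrict \<chi> T))) = - CE T (xs!j)"
proof -
  let ?B = "set xs \<union> T" and ?C = "insert (xs!j) T"
  have BV: "?B \<subseteq> V" using assms(1,2) by blast
  have CB: "?C \<subseteq> ?B" using assms(4) by auto
  have CT: "?C \<inter> T = T" by blast
  have "(\<Sum>\<chi>\<in>?B \<rightarrow>\<^sub>E \<Sigma>. X ?B \<chi> * ln (X ?C (restrict \<chi> ?C) / X T (restrict \<chi> T)))
     = (\<Sum>\<chi>\<in>?B \<rightarrow>\<^sub>E \<Sigma>. X ?B \<chi> * (\<lambda>\<psi>. ln (X ?C \<psi> / X T (restrict \<psi> T))) (restrict \<chi> ?C))"
    by (simp add: CT)
  also have "\<dots> = (\<Sum>\<psi>\<in>?C \<rightarrow>\<^sub>E \<Sigma>. X ?C \<psi> * ln (X ?C \<psi> / X T (restrict \<psi> T)))"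
    by (rule M[OF CB BV assms(3)])
  finally show ?thesis unfolding CE_def by simp
qed

lemma Ti_Suc:
  assumes "i < length xs"
  shows "T \<union> set (take (Suc i) xs) = insert (xs!i) (T \<union> set (take i xs))"
  using assms by (auto simp: take_Suc_conv_app_nth)

lemma partB_pt:
  assumes "T \<subseteq> V" "set xs \<subseteq> V" "card (set xs \<union> T) \<le> r" "\<chi> \<in> (set xs \<union> T) \<rightarrow>\<^sub>E \<Sigma>"
  shows "X (set xs \<union> T) \<chi> * ln (X (set xs \<union> T) \<chi> / X T (restrict \<chi> T))
     = (\<Sum>i<length xs. X (set xs \<union> T) \<chi> *
          ln (X (T \<union> set (take (Suc i) xs)) (restrict \<chi> (T \<union> set (take (Suc i) xs)))
              / X (T \<union> set (take i xs)) (restrict \<chi> (T \<union> set (take i xs)))))"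
proof -
  let ?B = "set xs \<union> T"
  define a where "a i = X (T \<union> set (take i xs)) (restrict \<chi> (T \<union> set (take i xs)))" for i
  have BV: "?B \<subseteq> V" using assms(1,2) by blast
  have nn: "0 \<le> X ?B \<chi>" by (rule distr(1)[OF BV assms(3) assms(4)])
  show ?thesis
  proof (cases "X ?B \<chi> = 0")
    case True
    then show ?thesis by simp
  next
    case False
    then have pos: "0 < X ?B \<chi>" using nn by linarith
    have apos: "0 < a i" for i
    proof -
      have sub: "T \<union> set (take i xs) \<subseteq> ?B" using set_take_subset[of i xs] by blast
      have "X ?B \<chi> \<le> a i" unfolding a_def by (rule Mle[OF sub BV assms(3) assms(4)])
      then show ?thesis using pos by linarith
    qed
    have an: "a (length xs) = X ?B \<chi>"
    proof -
      have e: "T \<union> set (take (length xs) xs) = ?B" by auto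
      show ?thesis by (simp only: a_def e PiE_restrict[OF assms(4)])
    qed
    have a0: "a 0 = X T (restrict \<chi> T)" by (simp only: a_def take0 list.set(1) Un_empty_right)
    have l: "\<And>i. ln (a (Suc i) / a i) = ln (a (Suc i)) - ln (a i)" by (rule ln_divide_pos[OF apos apos])
    have "(\<Sum>i<length xs. X ?B \<chi> * ln (a (Suc i) / a i)) = X ?B \<chi> * (\<Sum>i<length xs. ln (a (Suc i)) - ln (a i))"
      by (simp only: l sum_distrib_left)
    also have "\<dots> = X ?B \<chi> * (ln (a (length xs)) - ln (a 0))" by (simp only: sum_lessThan_telescope[of "\<lambda>n. ln (a n)"])
    also have "\<dots> = X ?B \<chi> * ln (X ?B \<chi> / X T (restrict \<chi> T))"
    proof -
      have q: "ln (a (length xs)) - ln (a 0) = ln (a (length xs) / a 0)" by (rule ln_divide_pos[OF apos apos, symmetric])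
      show ?thesis unfolding q by (simp only: an a0)
    qed
    finally have "(\<Sum>i<length xs. X ?B \<chi> * ln (a (Suc i) / a i)) = X ?B \<chi> * ln (X ?B \<chi> / X T (restrict \<chi> T))" .
    then show ?thesis unfolding a_def by (rule sym)
  qed
qed

lemma partB_i:
  assumes "T \<subseteq> V" "set xs \<subseteq> V" "card (set xs \<union> T) \<le> r" "i < length xs"
  shows "(\<Sum>\<chi>\<in>(set xs \<union> T) \<rightarrow>\<^sub>E \<Sigma>. X (set xs \<union> T) \<chi> *
          ln (X (T \<union> set (take (Suc i) xs)) (restrict \<chi> (T \<union> set (take (Suc i) xs)))
              / X (T \<union> set (take i xs)) (restrict \<chi> (T \<union> set (take i xs)))))
       = - CE (T \<union> set (take i xs)) (xs!i)"
proof -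
  let ?B = "set xs \<union> T" and ?U = "T \<union> set (take i xs)"
  let ?C = "insert (xs!i) ?U"
  have BV: "?B \<subseteq> V" using assms(1,2) by blast
  have CB: "?C \<subseteq> ?B" using assms(4) set_take_subset[of i xs] by auto
  have CU: "?C \<inter> ?U = ?U" by blast
  have e: "T \<union> set (take (Suc i) xs) = ?C" by (rule Ti_Suc[OF assms(4)])
  have "(\<Sum>\<chi>\<in>?B \<rightarrow>\<^sub>E \<Sigma>. X ?B \<chi> * ln (X ?C (restrict \<chi> ?C) / X ?U (restrict \<chi> ?U)))
     = (\<Sum>\<chi>\<in>?B \<rightarrow>\<^sub>E \<Sigma>. X ?B \<chi> * (\<lambda>\<psi>. ln (X ?C \<psi> / X ?U (restrict \<psi> ?U))) (restrict \<chi> ?C))"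
    by (simp only: restrict_restrict CU)
  also have "\<dots> = (\<Sum>\<psi>\<in>?C \<rightarrow>\<^sub>E \<Sigma>. X ?C \<psi> * ln (X ?C \<psi> / X ?U (restrict \<psi> ?U)))"
    by (rule M[OF CB BV assms(3)])
  finally show ?thesis unfolding CE_def e by simp
qed

lemma LLsum:
  assumes "T \<subseteq> V" "set xs \<subseteq> V" "card (set xs \<union> T) \<le> r"
  shows "(\<Sum>\<chi>\<in>(set xs \<union> T) \<rightarrow>\<^sub>E \<Sigma>. LL T xs \<chi>)
       = (\<Sum>i<length xs. CE T (xs!i) - CE (T \<union> set (take i xs)) (xs!i))"
proof -
  let ?B = "set xs \<union> T"
  let ?f = "\<lambda>i \<chi>. X ?B \<chi> *
          ln (X (T \<union> set (take (Suc i) xs)) (restrict \<chi> (T \<union> set (take (Suc i) xs)))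
              / X (T \<union> set (take i xs)) (restrict \<chi> (T \<union> set (take i xs))))"
  let ?g = "\<lambda>j \<chi>. X ?B \<chi> * ln (X (insert (xs!j) T) (restrict \<chi> (insert (xs!j) T)) / X T (restrict \<chi> T))"
  have "(\<Sum>\<chi>\<in>?B \<rightarrow>\<^sub>E \<Sigma>. LL T xs \<chi>) = (\<Sum>\<chi>\<in>?B \<rightarrow>\<^sub>E \<Sigma>. (\<Sum>i<length xs. ?f i \<chi>) - (\<Sum>j<length xs. ?g j \<chi>))"
  proof (rule sum.cong[OF refl])
    fix \<chi> assume h: "\<chi> \<in> ?B \<rightarrow>\<^sub>E \<Sigma>"
    show "LL T xs \<chi> = (\<Sum>i<length xs. ?f i \<chi>) - (\<Sum>j<length xs. ?g j \<chi>)"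
      unfolding LL_def right_diff_distrib sum_distrib_left partB_pt[OF assms h] ..
  qed
  also have "\<dots> = (\<Sum>i<length xs. \<Sum>\<chi>\<in>?B \<rightarrow>\<^sub>E \<Sigma>. ?f i \<chi>) - (\<Sum>j<length xs. \<Sum>\<chi>\<in>?B \<rightarrow>\<^sub>E \<Sigma>. ?g j \<chi>)"
  proof -
    have s1: "(\<Sum>\<chi>\<in>?B \<rightarrow>\<^sub>E \<Sigma>. \<Sum>i<length xs. ?f i \<chi>) = (\<Sum>i<length xs. \<Sum>\<chi>\<in>?B \<rightarrow>\<^sub>E \<Sigma>. ?f i \<chi>)"
      by (rule sum.swap)
    have s2: "(\<Sum>\<chi>\<in>?B \<rightarrow>\<^sub>E \<Sigma>. \<Sum>i<length xs. ?g i \<chi>) = (\<Sum>i<length xs. \<Sum>\<chi>\<in>?B \<rightarrow>\<^sub>E \<Sigma>. ?g i \<chi>)"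
      by (rule sum.swap)
    show ?thesis by (simp only: sum_subtractf s1 s2)
  qed
  also have "\<dots> = (\<Sum>i<length xs. - CE (T \<union> set (take i xs)) (xs!i)) - (\<Sum>j<length xs. - CE T (xs!j))"
    by (intro arg_cong2[where f="(-)"] sum.cong refl) (simp_all add: partA[OF assms] partB_i[OF assms])
  also have "\<dots> = (\<Sum>i<length xs. CE T (xs!i) - CE (T \<union> set (take i xs)) (xs!i))"
    by (simp add: sum_subtractf sum_negf)
  finally show ?thesis .
qed

end


context SA begin

lemma CE_nonneg:
  assumes "U \<subseteq> V" "a \<in> V" "card (insert a U) \<le> r"
  shows "0 \<le> CE U a"
proof -
  let ?C = "insert a U"
  have CV: "?C \<subseteq> V" using assms(1,2) by blast
  have UC: "U \<subseteq> ?C" by blast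
  have "(\<Sum>\<zeta>\<in>?C \<rightarrow>\<^sub>E \<Sigma>. X ?C \<zeta> * ln (X ?C \<zeta> / X U (restrict \<zeta> U))) \<le> 0"
  proof (rule sum_nonpos)
    fix \<zeta> assume z: "\<zeta> \<in> ?C \<rightarrow>\<^sub>E \<Sigma>"
    have nn: "0 \<le> X ?C \<zeta>" by (rule distr(1)[OF CV assms(3) z])
    have le: "X ?C \<zeta> \<le> X U (restrict \<zeta> U)" by (rule Mle[OF UC CV assms(3) z])
    show "X ?C \<zeta> * ln (X ?C \<zeta> / X U (restrict \<zeta> U)) \<le> 0"
    proof (cases "X ?C \<zeta> = 0")
      case False
      then have p: "0 < X ?C \<zeta>" using nn by linarith
      then have "0 < X U (restrict \<zeta> U)" using le by linarith
      then have "X ?C \<zeta> / X U (restrict \<zeta> U) \<le> 1" "0 < X ?C \<zeta> / X U (restrict \<zeta> U)"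
        using le p by (simp_all add: divide_le_eq_1)
      then have "ln (X ?C \<zeta> / X U (restrict \<zeta> U)) \<le> 0" by simp
      then show ?thesis using nn by (simp add: mult_nonneg_nonpos)
    qed simp
  qed
  then show ?thesis unfolding CE_def by simp
qed

lemma sum_insert_restrict:
  assumes "a \<notin> U"
  shows "(\<Sum>\<zeta>\<in>insert a U \<rightarrow>\<^sub>E \<Sigma>. g (restrict \<zeta> U)) = real (card \<Sigma>) * (\<Sum>\<phi>\<in>U \<rightarrow>\<^sub>E \<Sigma>. g \<phi>)"
proof -
  have "(\<Sum>\<zeta>\<in>insert a U \<rightarrow>\<^sub>E \<Sigma>. g (restrict \<zeta> U))
      = (\<Sum>yg\<in>\<Sigma> \<times> (U \<rightarrow>\<^sub>E \<Sigma>). g (restrict ((\<lambda>(y, g). g(a := y)) yg) U))"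
    unfolding PiE_insert_eq by (rule sum.reindex[OF inj_combinator[OF assms], unfolded comp_def])
  also have "\<dots> = (\<Sum>yg\<in>\<Sigma> \<times> (U \<rightarrow>\<^sub>E \<Sigma>). g (snd yg))"
  proof (rule sum.cong[OF refl])
    fix yg assume h: "yg \<in> \<Sigma> \<times> (U \<rightarrow>\<^sub>E \<Sigma>)"
    obtain y f where yg: "yg = (y, f)" by fastforce
    have "restrict (f(a := y)) U = f"
    proof
      fix x show "restrict (f(a := y)) U x = f x"
        using h yg assms by (cases "x \<in> U") (auto simp: PiE_iff extensional_def)
    qed
    then show "g (restrict ((\<lambda>(y, g). g(a := y)) yg) U) = g (snd yg)" using yg by simp
  qed
  also have "\<dots> = (\<Sum>y\<in>\<Sigma>. \<Sum>\<phi>\<in>U \<rightarrow>\<^sub>E \<Sigma>. g \<phi>)"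
    by (subst sum.cartesian_product) (simp add: case_prod_unfold)
  also have "\<dots> = real (card \<Sigma>) * (\<Sum>\<phi>\<in>U \<rightarrow>\<^sub>E \<Sigma>. g \<phi>)" by simp
  finally show ?thesis .
qed

lemma CE_le:
  assumes "U \<subseteq> V" "a \<in> V" "card (insert a U) \<le> r" "\<Sigma> \<noteq> {}"
  shows "CE U a \<le> ln (real (card \<Sigma>))"
proof -
  let ?C = "insert a U" and ?q = "real (card \<Sigma>)"
  have c0: "0 < card \<Sigma>" using finS assms(4) by (simp add: card_gt_0_iff)
  then have q1: "1 \<le> ?q" by simp
  then have qpos: "0 < ?q" by linarith
  have lnq: "0 \<le> ln ?q" using q1 by simp
  have CV: "?C \<subseteq> V" using assms(1,2) by blast
  have UC: "U \<subseteq> ?C" by blast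
  show ?thesis
  proof (cases "a \<in> U")
    case True
    then have Ce: "?C = U" by blast
    have "CE U a = 0" unfolding CE_def Ce
    proof -
      have "(\<Sum>\<zeta>\<in>U \<rightarrow>\<^sub>E \<Sigma>. X U \<zeta> * ln (X U \<zeta> / X U (restrict \<zeta> U))) = 0"
      proof (intro sum.neutral ballI)
        fix \<zeta> assume z: "\<zeta> \<in> U \<rightarrow>\<^sub>E \<Sigma>"
        have "restrict \<zeta> U = \<zeta>" using z by simp
        then show "X U \<zeta> * ln (X U \<zeta> / X U (restrict \<zeta> U)) = 0" by (cases "X U \<zeta> = 0") simp_all
      qed
      then show "- (\<Sum>\<zeta>\<in>U \<rightarrow>\<^sub>E \<Sigma>. X U \<zeta> * ln (X U \<zeta> / X U (restrict \<zeta> U))) = 0" by simp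
    qed
    then show ?thesis using lnq by simp
  next
    case False
    let ?p = "\<lambda>\<zeta>. X ?C \<zeta>" and ?P = "\<lambda>\<zeta>. X U (restrict \<zeta> U)"
    have UV: "U \<subseteq> V" by (rule assms(1))
    have cU: "card U \<le> r" using card_le[OF UC CV] assms(3) by linarith
    have s1: "(\<Sum>\<zeta>\<in>?C \<rightarrow>\<^sub>E \<Sigma>. ?p \<zeta>) = 1" by (rule distr(2)[OF CV assms(3)])
    have sP: "(\<Sum>\<zeta>\<in>?C \<rightarrow>\<^sub>E \<Sigma>. ?P \<zeta>) = ?q"
      using sum_insert_restrict[OF False, of "X U"] distr(2)[OF UV cU] by simp
    have trm: "- (?p \<zeta> * ln (?p \<zeta> / ?P \<zeta>)) - ?p \<zeta> * ln ?q \<le> ?P \<zeta> / ?q - ?p \<zeta>"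
      if z: "\<zeta> \<in> ?C \<rightarrow>\<^sub>E \<Sigma>" for \<zeta>
    proof -
      have nn: "0 \<le> ?p \<zeta>" by (rule distr(1)[OF CV assms(3) z])
      have le: "?p \<zeta> \<le> ?P \<zeta>" by (rule Mle[OF UC CV assms(3) z])
      show ?thesis
      proof (cases "?p \<zeta> = 0")
        case True
        then show ?thesis using nn le qpos by simp
      next
        case False
        then have p: "0 < ?p \<zeta>" using nn by linarith
        then have P: "0 < ?P \<zeta>" using le by linarith
        define y where "y = ?P \<zeta> / (?q * ?p \<zeta>)"
        have ypos: "0 < y" unfolding y_def using p P qpos by simp
        have "ln y \<le> y - 1" by (rule ln_le_minus_one[OF ypos])
        then have "?p \<zeta> * ln y \<le> ?p \<zeta> * (y - 1)" using p by (simp add: mult_left_mono)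
        also have "?p \<zeta> * (y - 1) = ?P \<zeta> / ?q - ?p \<zeta>" unfolding y_def using p qpos by (simp add: field_simps)
        finally have A: "?p \<zeta> * ln y \<le> ?P \<zeta> / ?q - ?p \<zeta>" .
        have B: "ln y = ln (?P \<zeta>) - ln ?q - ln (?p \<zeta>)" unfolding y_def using p P qpos
          by (simp add: ln_divide_pos ln_mult)
        have Cc: "ln (?p \<zeta> / ?P \<zeta>) = ln (?p \<zeta>) - ln (?P \<zeta>)" using p P by (simp add: ln_divide_pos)
        have "- (?p \<zeta> * ln (?p \<zeta> / ?P \<zeta>)) - ?p \<zeta> * ln ?q = ?p \<zeta> * ln y"
          unfolding B Cc by (simp add: algebra_simps)
        then show ?thesis using A by linarith
      qed
    qed
    have "CE U a - ln ?q = (\<Sum>\<zeta>\<in>?C \<rightarrow>\<^sub>E \<Sigma>. - (?p \<zeta> * ln (?p \<zeta> / ?P \<zeta>)) - ?p \<zeta> * ln ?q)"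
    proof -
      have "ln ?q = (\<Sum>\<zeta>\<in>?C \<rightarrow>\<^sub>E \<Sigma>. ?p \<zeta>) * ln ?q" by (simp only: s1 mult_1)
      also have "\<dots> = (\<Sum>\<zeta>\<in>?C \<rightarrow>\<^sub>E \<Sigma>. ?p \<zeta> * ln ?q)" by (rule sum_distrib_right)
      finally have e1: "ln ?q = (\<Sum>\<zeta>\<in>?C \<rightarrow>\<^sub>E \<Sigma>. ?p \<zeta> * ln ?q)" .
      have e2: "CE U a = (\<Sum>\<zeta>\<in>?C \<rightarrow>\<^sub>E \<Sigma>. - (?p \<zeta> * ln (?p \<zeta> / ?P \<zeta>)))"
        unfolding CE_def by (rule sum_negf[symmetric])
      have e3: "(\<Sum>\<zeta>\<in>?C \<rightarrow>\<^sub>E \<Sigma>. - (?p \<zeta> * ln (?p \<zeta> / ?P \<zeta>)) - ?p \<zeta> * ln ?q)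
        = (\<Sum>\<zeta>\<in>?C \<rightarrow>\<^sub>E \<Sigma>. - (?p \<zeta> * ln (?p \<zeta> / ?P \<zeta>))) - (\<Sum>\<zeta>\<in>?C \<rightarrow>\<^sub>E \<Sigma>. ?p \<zeta> * ln ?q)"
        by (rule sum_subtractf)
      show ?thesis using e1 e2 e3 by linarith
    qed
    also have "\<dots> \<le> (\<Sum>\<zeta>\<in>?C \<rightarrow>\<^sub>E \<Sigma>. ?P \<zeta> / ?q - ?p \<zeta>)" by (rule sum_mono) (rule trm)
    also have "\<dots> = (\<Sum>\<zeta>\<in>?C \<rightarrow>\<^sub>E \<Sigma>. ?P \<zeta>) / ?q - (\<Sum>\<zeta>\<in>?C \<rightarrow>\<^sub>E \<Sigma>. ?p \<zeta>)"
      by (simp only: sum_subtractf sum_divide_distrib)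
    also have "\<dots> = 0" using qpos by (simp only: sP s1) simp
    finally show ?thesis by simp
  qed
qed

end


lemma tuples0: "tuples A 0 = {[]}" by (auto simp: tuples_def)

lemma sum_tuples_add:
  "(\<Sum>S\<in>tuples A (m + n). g S) = (\<Sum>xs\<in>tuples A m. \<Sum>ys\<in>tuples A n. g (xs @ ys))"
proof (induction m arbitrary: g)
  case 0
  then show ?case by (simp add: tuples0)
next
  case (Suc m)
  have "(\<Sum>S\<in>tuples A (Suc m + n). g S) = (\<Sum>a\<in>A. \<Sum>S\<in>tuples A (m + n). g (a # S))"
    by (simp only: add_Suc sum_tuples_Suc)
  also have "\<dots> = (\<Sum>a\<in>A. \<Sum>xs\<in>tuples A m. \<Sum>ys\<in>tuples A n. g (a # xs @ ys))"
    using Suc[of "\<lambda>S. g (_ # S)"] by (simp add: Suc)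
  also have "\<dots> = (\<Sum>xs\<in>tuples A (Suc m). \<Sum>ys\<in>tuples A n. g (xs @ ys))"
    by (simp only: sum_tuples_Suc append_Cons)
  finally show ?case .
qed

lemma sum_take_nth:
  assumes "finite A" "i < k"
  shows "(\<Sum>S\<in>tuples A k. f (take i S) (S!i)) = real (card A) ^ (k - i - 1) * (\<Sum>xs\<in>tuples A i. \<Sum>a\<in>A. f xs a)"
proof -
  have k: "k = i + Suc (k - i - 1)" using assms by simp
  have "(\<Sum>S\<in>tuples A k. f (take i S) (S!i)) = (\<Sum>S\<in>tuples A (i + Suc (k - i - 1)). f (take i S) (S!i))"
    using k by simp
  also have "\<dots> = (\<Sum>xs\<in>tuples A i. \<Sum>zs\<in>tuples A (Suc (k - i - 1)). f (take i (xs @ zs)) ((xs @ zs)!i))"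
    by (rule sum_tuples_add)
  also have "\<dots> = (\<Sum>xs\<in>tuples A i. \<Sum>zs\<in>tuples A (Suc (k - i - 1)). f xs (zs!0))"
    by (intro sum.cong refl) (auto simp: tuples_def nth_append)
  also have "\<dots> = (\<Sum>xs\<in>tuples A i. \<Sum>a\<in>A. \<Sum>ys\<in>tuples A (k - i - 1). f xs a)"
    by (simp only: sum_tuples_Suc nth_Cons_0)
  also have "\<dots> = (\<Sum>xs\<in>tuples A i. \<Sum>a\<in>A. real (card A) ^ (k - i - 1) * f xs a)"
    using assms(1) by (simp add: card_tuples)
  also have "\<dots> = real (card A) ^ (k - i - 1) * (\<Sum>xs\<in>tuples A i. \<Sum>a\<in>A. f xs a)"
    by (simp add: sum_distrib_left)
  finally show ?thesis .
qed

lemma tele: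
  fixes K :: "nat \<Rightarrow> real"
  assumes "\<And>m. m \<le> l + i \<Longrightarrow> 0 \<le> K m \<and> K m \<le> c"
  shows "(\<Sum>t<l. K t - K (t + i)) \<le> real i * c"
  using assms
proof (induction i)
  case 0
  then show ?case by simp
next
  case (Suc i)
  have IH: "(\<Sum>t<l. K t - K (t + i)) \<le> real i * c" using Suc by simp
  have "(\<Sum>t<l. K t - K (t + Suc i)) = (\<Sum>t<l. K t - K (t + i)) + (\<Sum>t<l. K (i + t) - K (Suc (i + t)))"
    by (simp add: sum.distrib[symmetric] algebra_simps)
  also have "(\<Sum>t<l. K (i + t) - K (Suc (i + t))) = K i - K (i + l)"
    using sum_lessThan_telescope'[of "\<lambda>n. K (i + n)" l] by simp
  also have "K i - K (i + l) \<le> c" using Suc.prems[of i] Suc.prems[of "i + l"] by simp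
  finally show ?case using IH by (simp add: algebra_simps)
qed



context SA begin

definition KK :: "nat \<Rightarrow> real" where
  "KK m = (\<Sum>U\<in>tuples V m. \<Sum>a\<in>V. CE (set U) a) / real (card V) ^ (m + 1)"

lemma card_insert_tuple:
  assumes "U \<in> tuples V m"
  shows "card (insert a (set U)) \<le> m + 1"
proof -
  have "card (insert a (set U)) \<le> Suc (card (set U))" by (rule card_insert_le_m1) simp_all
  also have "card (set U) \<le> length U" by (rule card_length)
  finally show ?thesis using assms unfolding tuples_def by simp
qed

lemma KK_bounds:
  assumes "V \<noteq> {}" "\<Sigma> \<noteq> {}" "m + 1 \<le> r"
  shows "0 \<le> KK m \<and> KK m \<le> ln (real (card \<Sigma>))"
proof -
  let ?N = "real (card V)" and ?c = "ln (real (card \<Sigma>))"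
  have Npos: "0 < ?N" using assms(1) finV by (simp add: card_gt_0_iff)
  have b: "0 \<le> CE (set U) a \<and> CE (set U) a \<le> ?c" if U: "U \<in> tuples V m" and a: "a \<in> V" for U a
  proof -
    have UV: "set U \<subseteq> V" using U unfolding tuples_def by simp
    have c: "card (insert a (set U)) \<le> r" using card_insert_tuple[OF U, of a] assms(3) by linarith
    show ?thesis using CE_nonneg[OF UV a c] CE_le[OF UV a c assms(2)] by simp
  qed
  have s0: "0 \<le> (\<Sum>U\<in>tuples V m. \<Sum>a\<in>V. CE (set U) a)"
    using b by (intro sum_nonneg) auto
  have "(\<Sum>U\<in>tuples V m. \<Sum>a\<in>V. CE (set U) a) \<le> (\<Sum>U\<in>tuples V m. \<Sum>a\<in>V. ?c)"
    using b by (intro sum_mono) auto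
  also have "\<dots> = ?N ^ (m + 1) * ?c" using finV by (simp add: card_tuples)
  finally have s1: "(\<Sum>U\<in>tuples V m. \<Sum>a\<in>V. CE (set U) a) \<le> ?N ^ (m + 1) * ?c" .
  have "KK m \<le> ?c" unfolding KK_def using s1 Npos by (simp add: divide_le_eq mult.commute)
  moreover have "0 \<le> KK m" unfolding KK_def using s0 Npos by simp
  ultimately show ?thesis by simp
qed

lemma avg_i:
  assumes "i < k" "V \<noteq> {}"
  shows "(\<Sum>T\<in>tuples V t. \<Sum>S\<in>tuples V k. CE (set T) (S!i))
          = real (card V) ^ (t + k) * KK t"
    and "(\<Sum>T\<in>tuples V t. \<Sum>S\<in>tuples V k. CE (set T \<union> set (take i S)) (S!i))
          = real (card V) ^ (t + k) * KK (t + i)"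
proof -
  let ?N = "real (card V)"
  have "(\<Sum>T\<in>tuples V t. \<Sum>S\<in>tuples V k. CE (set T) (S!i))
      = (\<Sum>T\<in>tuples V t. ?N ^ (k - i - 1) * (\<Sum>xs\<in>tuples V i. \<Sum>a\<in>V. CE (set T) a))"
    by (rule sum.cong[OF refl]) (rule sum_take_nth[OF finV assms(1), where f="\<lambda>xs a. CE (set T) a" for T])
  also have "\<dots> = (\<Sum>T\<in>tuples V t. ?N ^ (k - i - 1) * (?N ^ i * (\<Sum>a\<in>V. CE (set T) a)))"
    using finV by (simp add: card_tuples)
  also have "\<dots> = ?N ^ (k - i - 1 + i) * (\<Sum>T\<in>tuples V t. \<Sum>a\<in>V. CE (set T) a)"
    by (simp add: sum_distrib_left power_add mult.assoc)
  also have "\<dots> = ?N ^ (t + k) * KK t"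
  proof -
    have "k - i - 1 + i + (t + 1) = t + k" using assms by simp
    then have e: "?N ^ (t + k) = ?N ^ (k - i - 1 + i) * ?N ^ (t + 1)" by (metis power_add)
    have "?N ^ (t + 1) \<noteq> 0" using assms(2) finV by simp
    then show ?thesis unfolding KK_def e by simp
  qed
  finally show "(\<Sum>T\<in>tuples V t. \<Sum>S\<in>tuples V k. CE (set T) (S!i)) = ?N ^ (t + k) * KK t" .
  have "(\<Sum>T\<in>tuples V t. \<Sum>S\<in>tuples V k. CE (set T \<union> set (take i S)) (S!i))
      = (\<Sum>T\<in>tuples V t. ?N ^ (k - i - 1) * (\<Sum>xs\<in>tuples V i. \<Sum>a\<in>V. CE (set T \<union> set xs) a))"
    by (rule sum.cong[OF refl]) (rule sum_take_nth[OF finV assms(1), where f="\<lambda>xs a. CE (set T \<union> set xs) a" for T])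
  also have "\<dots> = ?N ^ (k - i - 1) * (\<Sum>T\<in>tuples V t. \<Sum>xs\<in>tuples V i. \<Sum>a\<in>V. CE (set (T @ xs)) a)"
    by (simp add: sum_distrib_left)
  also have "\<dots> = ?N ^ (k - i - 1) * (\<Sum>U\<in>tuples V (t + i). \<Sum>a\<in>V. CE (set U) a)"
    by (simp only: sum_tuples_add)
  also have "\<dots> = ?N ^ (t + k) * KK (t + i)"
  proof -
    have "k - i - 1 + (t + i + 1) = t + k" using assms by simp
    then have e: "?N ^ (t + k) = ?N ^ (k - i - 1) * ?N ^ (t + i + 1)" by (metis power_add)
    have "?N ^ (t + i + 1) \<noteq> 0" using assms(2) finV by simp
    then show ?thesis unfolding KK_def e by simp
  qed
  finally show "(\<Sum>T\<in>tuples V t. \<Sum>S\<in>tuples V k. CE (set T \<union> set (take i S)) (S!i))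
          = ?N ^ (t + k) * KK (t + i)" .
qed

lemma avg:
  assumes "V \<noteq> {}"
  shows "(\<Sum>T\<in>tuples V t. \<Sum>S\<in>tuples V k. \<Sum>i<k. CE (set T) (S!i) - CE (set T \<union> set (take i S)) (S!i))
   = real (card V) ^ (t + k) * (\<Sum>i<k. KK t - KK (t + i))"
proof -
  have "(\<Sum>T\<in>tuples V t. \<Sum>S\<in>tuples V k. \<Sum>i<k. CE (set T) (S!i) - CE (set T \<union> set (take i S)) (S!i))
      = (\<Sum>i<k. \<Sum>T\<in>tuples V t. \<Sum>S\<in>tuples V k. CE (set T) (S!i) - CE (set T \<union> set (take i S)) (S!i))"
    by (simp only: sum.swap[of _ "{..<k}"])
  also have "\<dots> = (\<Sum>i<k. real (card V) ^ (t + k) * (KK t - KK (t + i)))"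
  proof (rule sum.cong[OF refl])
    fix i assume "i \<in> {..<k}"
    then have i: "i < k" by simp
    show "(\<Sum>T\<in>tuples V t. \<Sum>S\<in>tuples V k. CE (set T) (S!i) - CE (set T \<union> set (take i S)) (S!i))
        = real (card V) ^ (t + k) * (KK t - KK (t + i))"
      by (simp only: sum_subtractf avg_i[OF i assms] right_diff_distrib)
  qed
  also have "\<dots> = real (card V) ^ (t + k) * (\<Sum>i<k. KK t - KK (t + i))"
    by (simp only: sum_distrib_left)
  finally show ?thesis .
qed

end


context SA begin

definition PT :: "'v list \<Rightarrow> 'v list \<Rightarrow> real" where
  "PT T S = (\<Sum>\<phi>\<in>set T \<rightarrow>\<^sub>E \<Sigma>. if 0 < X (set T) \<phi> then X (set T) \<phi> * total_corr (cond X (set T) \<phi>) \<Sigma> S else 0)"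

lemma PT_facts:
  assumes "T \<in> tuples V t" "S \<in> tuples V k" "t + k \<le> r"
  shows "0 \<le> PT T S"
    and "PT T S = (\<Sum>i<k. CE (set T) (S!i) - CE (set T \<union> set (take i S)) (S!i))"
proof -
  have TV: "set T \<subseteq> V" and lT: "length T = t" using assms(1) unfolding tuples_def by auto
  have SV: "set S \<subseteq> V" and lS: "length S = k" using assms(2) unfolding tuples_def by auto
  have "card (set S \<union> set T) \<le> card (set S) + card (set T)" by (rule card_Un_le)
  also have "\<dots> \<le> length S + length T" using card_length[of S] card_length[of T] by linarith
  finally have c: "card (set S \<union> set T) \<le> r" using lT lS assms(3) by linarith
  show "0 \<le> PT T S" unfolding PT_def by (rule AGG_nonneg[OF TV SV c])
  show "PT T S = (\<Sum>i<k. CE (set T) (S!i) - CE (set T \<union> set (take i S)) (S!i))"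
    unfolding PT_def AGG[OF TV SV c] LLsum[OF TV SV c] lS ..
qed

lemma inner_swap:
  "(\<Sum>\<phi>\<in>set T \<rightarrow>\<^sub>E \<Sigma>. if 0 < X (set T) \<phi> then X (set T) \<phi> * csp_corr W V \<Sigma> k (cond X (set T) \<phi>) else 0)
   = (\<Sum>S\<in>tuples V k. W S * PT T S)"
proof -
  have "(\<Sum>\<phi>\<in>set T \<rightarrow>\<^sub>E \<Sigma>. if 0 < X (set T) \<phi> then X (set T) \<phi> * csp_corr W V \<Sigma> k (cond X (set T) \<phi>) else 0)
     = (\<Sum>\<phi>\<in>set T \<rightarrow>\<^sub>E \<Sigma>. \<Sum>S\<in>tuples V k. W S * (if 0 < X (set T) \<phi> then X (set T) \<phi> * total_corr (cond X (set T) \<phi>) \<Sigma> S else 0))"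
  proof (rule sum.cong[OF refl])
    fix \<phi>
    show "(if 0 < X (set T) \<phi> then X (set T) \<phi> * csp_corr W V \<Sigma> k (cond X (set T) \<phi>) else 0)
      = (\<Sum>S\<in>tuples V k. W S * (if 0 < X (set T) \<phi> then X (set T) \<phi> * total_corr (cond X (set T) \<phi>) \<Sigma> S else 0))"
    proof (cases "0 < X (set T) \<phi>")
      case True
      then show ?thesis unfolding csp_corr_def by (simp add: sum_distrib_left mult.left_commute)
    qed simp
  qed
  also have "\<dots> = (\<Sum>S\<in>tuples V k. \<Sum>\<phi>\<in>set T \<rightarrow>\<^sub>E \<Sigma>. W S * (if 0 < X (set T) \<phi> then X (set T) \<phi> * total_corr (cond X (set T) \<phi>) \<Sigma> S else 0))"
    by (rule sum.swap)
  also have "\<dots> = (\<Sum>S\<in>tuples V k. W S * PT T S)"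
    unfolding PT_def by (simp only: sum_distrib_left)
  finally show ?thesis .
qed

lemma exp_bound:
  fixes W :: "'v list \<Rightarrow> real" and \<Delta> :: real
  assumes V0: "V \<noteq> {}" and dpos: "0 < \<Delta>"
    and dense: "\<And>S. S \<in> tuples V k \<Longrightarrow> \<Delta> * W S \<le> 1 / real (card V) ^ k"
    and tk: "t + k \<le> r"
  shows "exp_cond_corr W V \<Sigma> k X t \<le> (\<Sum>i<k. KK t - KK (t + i)) / \<Delta>"
proof -
  let ?N = "real (card V)"
  have Npos: "0 < ?N" using V0 finV by (simp add: card_gt_0_iff)
  let ?D = "\<lambda>T S. (\<Sum>i<k. CE (set T) (S!i) - CE (set T \<union> set (take i S)) (S!i))"
  have "exp_cond_corr W V \<Sigma> k X t = (1 / ?N ^ t) * (\<Sum>T\<in>tuples V t. \<Sum>S\<in>tuples V k. W S * PT T S)"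
    unfolding exp_cond_corr_def by (simp only: inner_swap)
  also have "\<dots> \<le> (1 / ?N ^ t) * (\<Sum>T\<in>tuples V t. \<Sum>S\<in>tuples V k. ?D T S / (\<Delta> * ?N ^ k))"
  proof (rule mult_left_mono)
    show "0 \<le> 1 / ?N ^ t" using Npos by simp
    show "(\<Sum>T\<in>tuples V t. \<Sum>S\<in>tuples V k. W S * PT T S) \<le> (\<Sum>T\<in>tuples V t. \<Sum>S\<in>tuples V k. ?D T S / (\<Delta> * ?N ^ k))"
    proof (intro sum_mono)
      fix T S assume T: "T \<in> tuples V t" and S: "S \<in> tuples V k"
      have p0: "0 \<le> PT T S" by (rule PT_facts(1)[OF T S tk])
      have pe: "PT T S = ?D T S" by (rule PT_facts(2)[OF T S tk])
      have "\<Delta> * W S \<le> 1 / ?N ^ k" by (rule dense[OF S])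
      then have w: "W S \<le> 1 / (\<Delta> * ?N ^ k)" using dpos Npos by (simp add: field_simps)
      have "W S * PT T S \<le> 1 / (\<Delta> * ?N ^ k) * PT T S" by (rule mult_right_mono[OF w p0])
      then show "W S * PT T S \<le> ?D T S / (\<Delta> * ?N ^ k)" using pe by simp
    qed
  qed
  also have "\<dots> = (1 / ?N ^ t) * ((\<Sum>T\<in>tuples V t. \<Sum>S\<in>tuples V k. ?D T S) / (\<Delta> * ?N ^ k))"
    by (simp only: sum_divide_distrib)
  also have "\<dots> = (1 / ?N ^ t) * (?N ^ (t + k) * (\<Sum>i<k. KK t - KK (t + i)) / (\<Delta> * ?N ^ k))"
    by (simp only: avg[OF V0])
  also have "\<dots> = (\<Sum>i<k. KK t - KK (t + i)) / \<Delta>"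
    using Npos dpos by (simp add: power_add field_simps)
  finally show ?thesis .
qed

end


theorem lemma5p1:
  fixes V :: "'v set" and \<Sigma> :: "'a set" and k r l :: nat and \<Delta> :: real
    and W :: "'v list \<Rightarrow> real" and P :: "'v list \<Rightarrow> 'a list \<Rightarrow> real"
    and X :: "'v set \<Rightarrow> ('v \<Rightarrow> 'a) \<Rightarrow> real"
  assumes "max_kcsp V \<Sigma> k W P"
    and "0 < \<Delta>" and "csp_dense \<Delta> V k W"
    and "sherali_adams r V \<Sigma> X"
    and "0 < l" and "l \<le> r - k"
  shows "\<exists>t\<le>l. exp_cond_corr W V \<Sigma> k X t
           \<le> real k ^ 2 * ln (real (card \<Sigma>)) / (real l * \<Delta>)"
proof -
  have finV: "finite V" and V0: "V \<noteq> {}" and finS: "finite \<Sigma>" and S0: "\<Sigma> \<noteq> {}"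
    using assms(1) unfolding max_kcsp_def by auto
  interpret SA r V \<Sigma> X by unfold_locales (use assms(4) finV finS in auto)
  have dense: "\<And>S. S \<in> tuples V k \<Longrightarrow> \<Delta> * W S \<le> 1 / real (card V) ^ k"
    using assms(3) unfolding csp_dense_def by blast
  have lk: "l + k \<le> r" using assms(5,6) by linarith
  let ?c = "ln (real (card \<Sigma>))"
  have c0: "0 < card \<Sigma>" using finS S0 by (simp add: card_gt_0_iff)
  then have c: "0 \<le> ?c" by simp
  let ?E = "\<lambda>t. exp_cond_corr W V \<Sigma> k X t"
  have Et: "?E t \<le> (\<Sum>i<k. KK t - KK (t + i)) / \<Delta>" if "t < l" for t
    by (rule exp_bound[OF V0 assms(2) dense]) (use that lk in auto)
  have "(\<Sum>t<l. ?E t) \<le> (\<Sum>t<l. (\<Sum>i<k. KK t - KK (t + i)) / \<Delta>)"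
    by (rule sum_mono) (rule Et, simp)
  also have "\<dots> = (\<Sum>i<k. \<Sum>t<l. KK t - KK (t + i)) / \<Delta>"
    by (simp only: sum_divide_distrib[symmetric] sum.swap[of _ "{..<l}"])
  also have "\<dots> \<le> (\<Sum>i<k. real i * ?c) / \<Delta>"
  proof (rule divide_right_mono[OF sum_mono])
    fix i assume "i \<in> {..<k}"
    then have i: "i < k" by simp
    show "(\<Sum>t<l. KK t - KK (t + i)) \<le> real i * ?c"
    proof (rule tele)
      fix m assume "m \<le> l + i"
      then have "m + 1 \<le> r" using i lk by linarith
      then show "0 \<le> KK m \<and> KK m \<le> ?c" by (rule KK_bounds[OF V0 S0])
    qed
  qed (use assms(2) in simp)
  also have "\<dots> \<le> (real k ^ 2 * ?c) / \<Delta>"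
  proof (rule divide_right_mono)
    have "(\<Sum>i<k. real i * ?c) \<le> (\<Sum>i<k. real k * ?c)"
      by (rule sum_mono) (use c in \<open>auto intro: mult_right_mono\<close>)
    also have "\<dots> = real k ^ 2 * ?c" by (simp add: power2_eq_square)
    finally show "(\<Sum>i<k. real i * ?c) \<le> real k ^ 2 * ?c" .
  qed (use assms(2) in simp)
  finally have sumE: "(\<Sum>t<l. ?E t) \<le> real k ^ 2 * ?c / \<Delta>" .
  show ?thesis
  proof (rule ccontr)
    assume "\<not> ?thesis"
    then have gt0: "\<forall>t\<le>l. \<not> ?E t \<le> real k ^ 2 * ?c / (real l * \<Delta>)" by blast
    have gt: "real k ^ 2 * ?c / (real l * \<Delta>) < ?E t" if "t < l" for t
      using gt0 that by (meson less_imp_le not_le)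
    have "(\<Sum>t<l. real k ^ 2 * ?c / (real l * \<Delta>)) < (\<Sum>t<l. ?E t)"
      by (rule sum_strict_mono) (use gt assms(5) in auto)
    also have "(\<Sum>t<l. real k ^ 2 * ?c / (real l * \<Delta>)) = real k ^ 2 * ?c / \<Delta>"
      using assms(5) by simp
    finally show False using sumE by simp
  qed
qed



end
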